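(* Let $T$ be a $\mathcal{C}_b$-semigroup of kernel operators on $\mathcal{B}_b(\mathds{R}^d)$ of type $(M,\omega)$ consisting of strong Feller operators, with full generator $\hat A$ and Laplace transform $(R(\lambda))_{\operatorname{Re}\lambda>\omega}$, and let $\rho>0$ be such that $T(t)f\in\mathcal{C}_b^\rho(\mathds{R}^d)$ for all $t>0$, $f\in\mathcal{B}_b(\mathds{R}^d)$ and $\|T(t)f\|_{\mathcal{C}_b^\rho}\le\varphi(t)\|f\|_\infty$ for $t\in(0,1)$, $f\in\mathcal{B}_b(\mathds{R}^d)$, for some $\varphi\in L^1(0,1)$. Then for every $\lambda\in\mathds{C}$ with $\operatorname{Re}\lambda>\omega$ we have $R(\lambda)f\in\mathcal{C}_b^\rho(\mathds{R}^d)$ for all $f\in\mathcal{B}_b(\mathds{R}^d)$ and $\|R(\lambda)f\|_{\mathcal{C}_b^\rho}\le C(\lambda)\|f\|_\infty$ with a constant $C(\lambda)$ satisfying $C(\lambda)\to0$ as $\operatorname{Re}\lambda\to\infty$. In particular $D(\hat A)\subset\mathcal{C}_b^\rho(\mathds{R}^d)$.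
   Context: Kernel operator: $Tf(x)=\int f(y)k(x,dy)$ with a bounded kernel. Semigroup of kernel operators of type $(M,\omega)$: kernel operators $T(t)$, $t>0$, with $T(t+s)=T(t)T(s)$, $\|T(t)\|\le Me^{\omega t}$, $(t,x)\mapsto T(t)f(x)$ measurable. $R(\lambda)f(x)=\int_0^\infty e^{-\lambda t}T(t)f(x)dt$. Full generator $\hat A=\{(f,g):T(t)f-f=\int_0^tT(s)g\,ds\ \forall t>0\}$, $D(\hat A)=\{f:\exists g,(f,g)\in\hat A\}$. $\mathcal{C}_b$-semigroup: leaves bounded continuous functions invariant and $T(t)f\to f$ boundedly pointwise as $t\to0$ for such $f$. Strong Feller: maps bounded Borel functions into bounded continuous ones. $\mathcal{C}_b^\rho$: standard Hölder space of order $\rho$ with its norm. *)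

theory Defs
  imports "HOL-Probability.Probability"
begin

type_synonym 'n fn = "real^'n \<Rightarrow> complex"

definition Bb :: "('n::finite) fn set" where
  "Bb = {f. f \<in> borel_measurable borel \<and> bounded (range f)}"

definition supnorm :: "('n::finite) fn \<Rightarrow> real" where
  "supnorm f = (SUP x. cmod (f x))"

definition Cb :: "('n::finite) fn set" where
  "Cb = {f. continuous_on UNIV f \<and> bounded (range f)}"

definition fin_kernel :: "(real^'n::finite \<Rightarrow> (real^'n) measure) \<Rightarrow> bool" where
  "fin_kernel k \<longleftrightarrow> (\<forall>x. sets (k x) = sets borel)
     \<and> (\<forall>A\<in>sets borel. (\<lambda>x. emeasure (k x) A) \<in> borel_measurable borel)
     \<and> (\<exists>C. \<forall>x. emeasure (k x) UNIV \<le> ennreal C)"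

text \<open>Kernel operator with a bounded complex kernel k = k1 - k2 + i (k3 - k4)
  (Jordan decomposition); only its action on Bb matters.\<close>
definition kernel_operator :: "(('n::finite) fn \<Rightarrow> 'n fn) \<Rightarrow> bool" where
  "kernel_operator T \<longleftrightarrow> (\<exists>k1 k2 k3 k4.
     fin_kernel k1 \<and> fin_kernel k2 \<and> fin_kernel k3 \<and> fin_kernel k4 \<and>
     (\<forall>f\<in>Bb. \<forall>x. T f x = (LINT y|k1 x. f y) - (LINT y|k2 x. f y)
                         + \<i> * ((LINT y|k3 x. f y) - (LINT y|k4 x. f y))))"

definition kernel_semigroup ::
  "(real \<Rightarrow> ('n::finite) fn \<Rightarrow> 'n fn) \<Rightarrow> real \<Rightarrow> real \<Rightarrow> bool" where
  "kernel_semigroup T M \<omega> \<longleftrightarrow>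
     (\<forall>t>0. kernel_operator (T t))
   \<and> (\<forall>t>0. \<forall>s>0. \<forall>f\<in>Bb. T (t + s) f = T t (T s f))
   \<and> (\<forall>t>0. \<forall>f\<in>Bb. supnorm (T t f) \<le> M * exp (\<omega> * t) * supnorm f)
   \<and> (\<forall>f\<in>Bb. (\<lambda>p. T (fst p) f (snd p))
         \<in> borel_measurable (restrict_space borel {0<..} \<Otimes>\<^sub>M borel))"

definition Cb_semigroup :: "(real \<Rightarrow> ('n::finite) fn \<Rightarrow> 'n fn) \<Rightarrow> bool" where
  "Cb_semigroup T \<longleftrightarrow>
     (\<forall>t>0. \<forall>f\<in>Cb. T t f \<in> Cb)
   \<and> (\<forall>f\<in>Cb. (\<forall>x. ((\<lambda>t. T t f x) \<longlongrightarrow> f x) (at_right 0))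
             \<and> (\<exists>C. \<forall>t\<in>{0<..1}. supnorm (T t f) \<le> C))"

definition strong_Feller :: "(('n::finite) fn \<Rightarrow> 'n fn) \<Rightarrow> bool" where
  "strong_Feller S \<longleftrightarrow> (\<forall>f\<in>Bb. S f \<in> Cb)"

definition laplace_tr :: "(real \<Rightarrow> ('n::finite) fn \<Rightarrow> 'n fn) \<Rightarrow> complex \<Rightarrow> 'n fn \<Rightarrow> 'n fn" where
  "laplace_tr T z f x = (LINT t:{0<..}|lborel. exp (- z * complex_of_real t) * T t f x)"

definition full_generator :: "(real \<Rightarrow> ('n::finite) fn \<Rightarrow> 'n fn) \<Rightarrow> ('n fn \<times> 'n fn) set" where
  "full_generator T = {(f, g). f \<in> Bb \<and> g \<in> Bb \<and>
      (\<forall>t>0. \<forall>x. T t f x - f x = (LINT s:{0<..t}|lborel. T s g x))}"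

definition partial_d :: "'n::finite \<Rightarrow> 'n fn \<Rightarrow> 'n fn" where
  "partial_d i g x = vector_derivative (\<lambda>t. g (x + t *\<^sub>R axis i 1)) (at 0)"

fun pd :: "('n::finite) list \<Rightarrow> 'n fn \<Rightarrow> 'n fn" where
  "pd [] f = f"
| "pd (i # is) f = partial_d i (pd is f)"

definition hk :: "real \<Rightarrow> nat" where "hk \<rho> = nat \<lfloor>\<rho>\<rfloor>"
definition halpha :: "real \<Rightarrow> real" where "halpha \<rho> = \<rho> - real (hk \<rho>)"

definition hoelder_semi :: "real \<Rightarrow> ('n::finite) fn \<Rightarrow> real" where
  "hoelder_semi \<alpha> g = (SUP p\<in>{p. fst p \<noteq> snd p}. cmod (g (fst p) - g (snd p)) / dist (fst p) (snd p) powr \<alpha>)"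

definition Cb_rho :: "real \<Rightarrow> ('n::finite) fn set" where
  "Cb_rho \<rho> = {f.
     (\<forall>ls. length ls < hk \<rho> \<longrightarrow> (\<forall>i x.
         ((\<lambda>t. pd ls f (x + t *\<^sub>R axis i 1)) has_vector_derivative pd (i # ls) f x) (at 0)))
   \<and> (\<forall>ls. length ls \<le> hk \<rho> \<longrightarrow> pd ls f \<in> Cb)
   \<and> (halpha \<rho> > 0 \<longrightarrow> (\<forall>ls. length ls = hk \<rho> \<longrightarrow>
         (\<exists>L. \<forall>x y. cmod (pd ls f x - pd ls f y) \<le> L * dist x y powr halpha \<rho>)))}"

definition Cb_rho_norm :: "real \<Rightarrow> ('n::finite) fn \<Rightarrow> real" where
  "Cb_rho_norm \<rho> f =
     (\<Sum>ls\<in>{ls. length ls \<le> hk \<rho>}. supnorm (pd ls f))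
   + (if halpha \<rho> > 0 then (\<Sum>ls\<in>{ls. length ls = hk \<rho>}. hoelder_semi (halpha \<rho>) (pd ls f)) else 0)"

end

theory Submission
  imports Defs "HOL-Real_Asymp.Real_Asymp"
begin


lemma hvd_iff:
  fixes \<phi> :: "real \<Rightarrow> 'a::real_normed_vector"
  shows "(\<phi> has_vector_derivative D) (at x) \<longleftrightarrow> ((\<lambda>y. (\<phi> y - \<phi> x) /\<^sub>R (y - x)) \<longlongrightarrow> D) (at x)"
proof -
  have eq: "norm (((\<phi> y - \<phi> x) - (y - x) *\<^sub>R D) /\<^sub>R norm (y - x)) = norm ((\<phi> y - \<phi> x) /\<^sub>R (y - x) - D)"
    if "y \<noteq> x" for y
  proof -
    have "(\<phi> y - \<phi> x) /\<^sub>R (y - x) - D = ((\<phi> y - \<phi> x) - (y - x) *\<^sub>R D) /\<^sub>R (y - x)"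
      using that by (simp add: scaleR_diff_right)
    then show ?thesis by simp
  qed
  have "(\<phi> has_vector_derivative D) (at x) \<longleftrightarrow>
     ((\<lambda>y. norm (((\<phi> y - \<phi> x) - (y - x) *\<^sub>R D) /\<^sub>R norm (y - x))) \<longlongrightarrow> 0) (at x)"
    unfolding has_vector_derivative_def has_derivative_at_within tendsto_norm_zero_iff
    by (simp add: bounded_linear_scaleR_left)
  also have "\<dots> \<longleftrightarrow> ((\<lambda>y. norm ((\<phi> y - \<phi> x) /\<^sub>R (y - x) - D)) \<longlongrightarrow> 0) (at x)"
    by (rule tendsto_cong, unfold eventually_at_filter, rule always_eventually, use eq in blast)
  also have "\<dots> \<longleftrightarrow> ((\<lambda>y. (\<phi> y - \<phi> x) /\<^sub>R (y - x)) \<longlongrightarrow> D) (at x)"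
    unfolding tendsto_norm_zero_iff LIM_zero_iff ..
  finally show ?thesis .
qed

lemma mvt_bound:
  fixes \<phi> :: "real \<Rightarrow> complex"
  assumes d: "\<And>s. (\<phi> has_vector_derivative \<phi>' s) (at s)"
    and B: "\<And>s. cmod (\<phi>' s) \<le> B"
  shows "cmod (\<phi> b - \<phi> a) \<le> B * \<bar>b - a\<bar>"
proof -
  have cont: "continuous_on S \<phi>" for S
    using d by (meson continuous_at_imp_continuous_on has_vector_derivative_continuous)
  have *: "cmod (\<phi> b - \<phi> a) \<le> B * \<bar>b - a\<bar>" if "a < b" for a b
  proof -
    have "\<exists>x\<in>{a<..<b}. norm (\<phi> b - \<phi> a) \<le> norm ((\<lambda>h. h *\<^sub>R \<phi>' x) (b - a))"
      by (rule mvt_general) (use that cont d in \<open>auto simp: has_vector_derivative_def\<close>)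
    then obtain x where "norm (\<phi> b - \<phi> a) \<le> norm ((b - a) *\<^sub>R \<phi>' x)" by auto
    also have "\<dots> \<le> B * \<bar>b - a\<bar>" using B[of x] that
      by (simp add: mult.commute mult_left_mono)
    finally show ?thesis by simp
  qed
  show ?thesis
  proof (cases a b rule: linorder_cases)
    case less then show ?thesis using * by blast
  next
    case equal then show ?thesis by simp
  next
    case greater then show ?thesis using *[OF greater] by (simp add: norm_minus_commute abs_minus_commute)
  qed
qed

lemma shift_deriv:
  fixes g :: "real^'n \<Rightarrow> complex"
  assumes "\<And>y. ((\<lambda>h. g (y + h *\<^sub>R v)) has_vector_derivative g' y) (at 0)"
  shows "((\<lambda>h. g (x + h *\<^sub>R v)) has_vector_derivative g' (x + s *\<^sub>R v)) (at s)"
proof -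
  have 1: "((\<lambda>h. h - s) has_vector_derivative 1) (at s)"
    by (auto intro!: derivative_eq_intros)
  have 2: "((\<lambda>h. g ((x + s *\<^sub>R v) + h *\<^sub>R v)) has_vector_derivative g' (x + s *\<^sub>R v)) (at ((\<lambda>h. h - s) s))"
    using assms by simp
  have "((\<lambda>h. g ((x + s *\<^sub>R v) + h *\<^sub>R v)) \<circ> (\<lambda>h. h - s)) = (\<lambda>h. g (x + h *\<^sub>R v))"
    by (auto simp: algebra_simps fun_eq_iff)
  with vector_diff_chain_at[OF 1 2] show ?thesis by simp
qed



lemma finite_ls: "finite {ls::('n::finite) list. length ls \<le> k}"
proof -
  have "finite {ls::'n list. set ls \<subseteq> UNIV \<and> length ls \<le> k}"
    by (rule finite_lists_length_le) simp
  then show ?thesis by simp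
qed

lemma finite_ls_eq: "finite {ls::('n::finite) list. length ls = k}"
  by (rule finite_subset[OF _ finite_ls[of k]]) auto

lemma bdd_norm: "bounded (range f) \<Longrightarrow> bdd_above (range (\<lambda>x. cmod (f x)))"
  by (auto simp: bounded_iff bdd_above_def)

lemma supnorm_ge: "bounded (range f) \<Longrightarrow> cmod (f x) \<le> supnorm f"
  unfolding supnorm_def by (rule cSUP_upper[OF _ bdd_norm]) auto

lemma supnorm_nonneg: "bounded (range f) \<Longrightarrow> 0 \<le> supnorm f"
  using supnorm_ge[of f undefined] by (meson norm_ge_zero order_trans)

lemma supnorm_le: "(\<And>x. cmod (f x) \<le> B) \<Longrightarrow> supnorm f \<le> B"
  unfolding supnorm_def by (rule cSUP_least) auto

lemma pairs_ne: "{p::(real^'n::finite) \<times> (real^'n). fst p \<noteq> snd p} \<noteq> {}"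
proof -
  have "(0::real^'n, axis undefined 1) \<in> {p. fst p \<noteq> snd p}"
    by (simp add: axis_eq_0_iff)
  then show ?thesis by blast
qed

lemma hoelder_ge:
  fixes g :: "('n::finite) fn"
  assumes L: "\<And>x y. cmod (g x - g y) \<le> L * dist x y powr a" and xy: "x \<noteq> y"
  shows "cmod (g x - g y) / dist x y powr a \<le> hoelder_semi a g"
proof -
  have bdd: "bdd_above ((\<lambda>p. cmod (g (fst p) - g (snd p)) / dist (fst p) (snd p) powr a) ` {p. fst p \<noteq> snd p})"
  proof (rule bdd_aboveI2)
    fix p :: "(real^'n) \<times> (real^'n)" assume "p \<in> {p. fst p \<noteq> snd p}"
    then have "dist (fst p) (snd p) powr a > 0" by simp
    then show "cmod (g (fst p) - g (snd p)) / dist (fst p) (snd p) powr a \<le> L"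
      using L[of "fst p" "snd p"] by (simp add: divide_le_eq)
  qed
  show ?thesis unfolding hoelder_semi_def
    using cSUP_upper[OF _ bdd, of "(x,y)"] xy by simp
qed

lemma hoelder_ineq:
  fixes g :: "('n::finite) fn"
  assumes L: "\<And>x y. cmod (g x - g y) \<le> L * dist x y powr a"
  shows "cmod (g x - g y) \<le> hoelder_semi a g * dist x y powr a"
proof (cases "x = y")
  case True then show ?thesis by simp
next
  case False
  then have "dist x y powr a > 0" by simp
  with hoelder_ge[OF L False] show ?thesis by (simp add: divide_le_eq)
qed

lemma hoelder_nonneg:
  fixes g :: "('n::finite) fn"
  assumes L: "\<And>x y. cmod (g x - g y) \<le> L * dist x y powr a"
  shows "0 \<le> hoelder_semi a g"
  using hoelder_ge[OF L, of 0 "axis undefined 1"] by (simp add: axis_eq_0_iff) (meson order_trans zero_le_divide_iff norm_ge_zero powr_ge_zero)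

lemma hoelder_le:
  fixes g :: "('n::finite) fn"
  assumes "\<And>x y. x \<noteq> y \<Longrightarrow> cmod (g x - g y) / dist x y powr a \<le> B"
  shows "hoelder_semi a g \<le> B"
  unfolding hoelder_semi_def by (rule cSUP_least[OF pairs_ne]) (use assms in auto)

lemma Cb_rho_D:
  assumes "g \<in> Cb_rho \<rho>"
  shows "\<And>ls i x. length ls < hk \<rho> \<Longrightarrow>
         ((\<lambda>t. pd ls g (x + t *\<^sub>R axis i 1)) has_vector_derivative pd (i # ls) g x) (at 0)"
    and "\<And>ls. length ls \<le> hk \<rho> \<Longrightarrow> pd ls g \<in> Cb"
    and "\<And>ls. halpha \<rho> > 0 \<Longrightarrow> length ls = hk \<rho> \<Longrightarrow>
         (\<exists>L. \<forall>x y. cmod (pd ls g x - pd ls g y) \<le> L * dist x y powr halpha \<rho>)"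
  using assms unfolding Cb_rho_def by auto

lemma Cb_rho_norm_ge:
  assumes g: "g \<in> Cb_rho \<rho>"
  shows "\<And>ls. length ls \<le> hk \<rho> \<Longrightarrow> supnorm (pd ls g) \<le> Cb_rho_norm \<rho> g"
    and "\<And>ls. halpha \<rho> > 0 \<Longrightarrow> length ls = hk \<rho> \<Longrightarrow> hoelder_semi (halpha \<rho>) (pd ls g) \<le> Cb_rho_norm \<rho> g"
    and "0 \<le> Cb_rho_norm \<rho> g"
proof -
  have s0: "0 \<le> supnorm (pd ls g)" if "ls \<in> {ls. length ls \<le> hk \<rho>}" for ls
    using Cb_rho_D(2)[OF g] that by (auto simp: Cb_def intro!: supnorm_nonneg)
  have h0: "0 \<le> hoelder_semi (halpha \<rho>) (pd ls g)" if th: "halpha \<rho> > 0" "ls \<in> {ls. length ls = hk \<rho>}" for ls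
  proof -
    obtain L where "\<forall>x y. cmod (pd ls g x - pd ls g y) \<le> L * dist x y powr halpha \<rho>"
      using Cb_rho_D(3)[OF g, of ls] th by auto
    then show ?thesis by (intro hoelder_nonneg[of _ L]) auto
  qed
  have S0: "0 \<le> (\<Sum>ls\<in>{ls. length ls \<le> hk \<rho>}. supnorm (pd ls g))"
    by (rule sum_nonneg) (use s0 in blast)
  have H0: "0 \<le> (if halpha \<rho> > 0 then (\<Sum>ls\<in>{ls. length ls = hk \<rho>}. hoelder_semi (halpha \<rho>) (pd ls g)) else 0)"
    using h0 by (auto intro!: sum_nonneg)
  show "0 \<le> Cb_rho_norm \<rho> g" unfolding Cb_rho_norm_def using S0 H0 by linarith
  show "supnorm (pd ls g) \<le> Cb_rho_norm \<rho> g" if "length ls \<le> hk \<rho>" for ls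
  proof -
    have "supnorm (pd ls g) \<le> (\<Sum>ls\<in>{ls. length ls \<le> hk \<rho>}. supnorm (pd ls g))"
      by (rule member_le_sum) (use that s0 finite_ls in auto)
    then show ?thesis unfolding Cb_rho_norm_def using H0 by linarith
  qed
  show "hoelder_semi (halpha \<rho>) (pd ls g) \<le> Cb_rho_norm \<rho> g" if "halpha \<rho> > 0" "length ls = hk \<rho>" for ls
  proof -
    have "hoelder_semi (halpha \<rho>) (pd ls g) \<le> (\<Sum>ls\<in>{ls. length ls = hk \<rho>}. hoelder_semi (halpha \<rho>) (pd ls g))"
      by (rule member_le_sum) (use that h0 finite_ls_eq in auto)
    then show ?thesis unfolding Cb_rho_norm_def using S0 that by auto
  qed
qed



lemma Cb_lin:
  assumes "u \<in> Cb" "v \<in> Cb"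
  shows "(\<lambda>x. a * u x + b * v x) \<in> Cb"
proof -
  obtain Bu where Bu: "\<And>x. cmod (u x) \<le> Bu" using assms(1) unfolding Cb_def bounded_iff by auto
  obtain Bv where Bv: "\<And>x. cmod (v x) \<le> Bv" using assms(2) unfolding Cb_def bounded_iff by auto
  have "cmod (a * u x + b * v x) \<le> cmod a * Bu + cmod b * Bv" for x
  proof -
    have "cmod (a * u x + b * v x) \<le> cmod a * cmod (u x) + cmod b * cmod (v x)"
      by (metis norm_mult norm_triangle_ineq)
    also have "\<dots> \<le> cmod a * Bu + cmod b * Bv"
      by (intro add_mono mult_left_mono Bu Bv) auto
    finally show ?thesis .
  qed
  then have "bounded (range (\<lambda>x. a * u x + b * v x))"
    unfolding bounded_iff by auto
  moreover have "continuous_on UNIV (\<lambda>x. a * u x + b * v x)"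
    using assms unfolding Cb_def by (auto intro!: continuous_intros)
  ultimately show ?thesis unfolding Cb_def by auto
qed

lemma pd_lin:
  assumes u: "u \<in> Cb_rho \<rho>" and v: "v \<in> Cb_rho \<rho>"
  shows "length ls \<le> hk \<rho> \<Longrightarrow> pd ls (\<lambda>x. a * u x + b * v x) = (\<lambda>x. a * pd ls u x + b * pd ls v x)"
proof (induction ls)
  case Nil then show ?case by simp
next
  case (Cons i ls)
  then have l: "length ls < hk \<rho>" by simp
  have IH: "pd ls (\<lambda>x. a * u x + b * v x) = (\<lambda>x. a * pd ls u x + b * pd ls v x)"
    using Cons l by simp
  show ?case
  proof
    fix x
    have d: "((\<lambda>t. a * pd ls u (x + t *\<^sub>R axis i 1) + b * pd ls v (x + t *\<^sub>R axis i 1))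
       has_vector_derivative (a * pd (i # ls) u x + b * pd (i # ls) v x)) (at 0)"
      by (intro has_vector_derivative_add has_vector_derivative_mult_right Cb_rho_D(1)[OF u l] Cb_rho_D(1)[OF v l])
    show "pd (i # ls) (\<lambda>x. a * u x + b * v x) x = a * pd (i # ls) u x + b * pd (i # ls) v x"
      by (simp add: IH partial_d_def vector_derivative_at[OF d])
  qed
qed

lemma Cb_rho_lin:
  fixes u v :: "('n::finite) fn"
  assumes u: "u \<in> Cb_rho \<rho>" and v: "v \<in> Cb_rho \<rho>"
  shows "(\<lambda>x. a * u x + b * v x) \<in> Cb_rho \<rho>"
  unfolding Cb_rho_def
proof (intro CollectI conjI allI impI)
  fix ls :: "'n list" and i x assume l: "length ls < hk \<rho>"
  have d: "((\<lambda>t. a * pd ls u (x + t *\<^sub>R axis i 1) + b * pd ls v (x + t *\<^sub>R axis i 1))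
       has_vector_derivative (a * pd (i # ls) u x + b * pd (i # ls) v x)) (at 0)"
    by (intro has_vector_derivative_add has_vector_derivative_mult_right Cb_rho_D(1)[OF u l] Cb_rho_D(1)[OF v l])
  then show "((\<lambda>t. pd ls (\<lambda>x. a * u x + b * v x) (x + t *\<^sub>R axis i 1)) has_vector_derivative
          pd (i # ls) (\<lambda>x. a * u x + b * v x) x) (at 0)"
    using pd_lin[OF u v, of ls] pd_lin[OF u v, of "i # ls"] l by simp
next
  fix ls :: "'n list" assume l: "length ls \<le> hk \<rho>"
  show "pd ls (\<lambda>x. a * u x + b * v x) \<in> Cb"
    using pd_lin[OF u v l] Cb_lin[OF Cb_rho_D(2)[OF u l] Cb_rho_D(2)[OF v l]] by simp
next
  fix ls :: "'n list" assume h: "0 < halpha \<rho>" and l: "length ls = hk \<rho>"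
  obtain Lu where Lu: "\<And>x y. cmod (pd ls u x - pd ls u y) \<le> Lu * dist x y powr halpha \<rho>"
    using Cb_rho_D(3)[OF u h l] by auto
  obtain Lv where Lv: "\<And>x y. cmod (pd ls v x - pd ls v y) \<le> Lv * dist x y powr halpha \<rho>"
    using Cb_rho_D(3)[OF v h l] by auto
  have "cmod (pd ls (\<lambda>x. a * u x + b * v x) x - pd ls (\<lambda>x. a * u x + b * v x) y)
      \<le> (cmod a * Lu + cmod b * Lv) * dist x y powr halpha \<rho>" for x y
  proof -
    have "pd ls (\<lambda>x. a * u x + b * v x) x - pd ls (\<lambda>x. a * u x + b * v x) y
       = a * (pd ls u x - pd ls u y) + b * (pd ls v x - pd ls v y)"
      using pd_lin[OF u v, of ls] l by (simp add: algebra_simps)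
    then have "cmod (pd ls (\<lambda>x. a * u x + b * v x) x - pd ls (\<lambda>x. a * u x + b * v x) y)
        \<le> cmod a * cmod (pd ls u x - pd ls u y) + cmod b * cmod (pd ls v x - pd ls v y)"
      by (metis norm_mult norm_triangle_ineq)
    also have "\<dots> \<le> cmod a * (Lu * dist x y powr halpha \<rho>) + cmod b * (Lv * dist x y powr halpha \<rho>)"
      by (intro add_mono mult_left_mono Lu Lv) auto
    finally show ?thesis by (simp add: algebra_simps)
  qed
  then show "\<exists>L. \<forall>x y. cmod (pd ls (\<lambda>x. a * u x + b * v x) x - pd ls (\<lambda>x. a * u x + b * v x) y)
          \<le> L * dist x y powr halpha \<rho>" by blast
qed

lemma Cb_rho_scale:
  fixes u :: "('n::finite) fn"
  assumes u: "u \<in> Cb_rho \<rho>"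
  shows "(\<lambda>x. c * u x) \<in> Cb_rho \<rho>" "Cb_rho_norm \<rho> (\<lambda>x. c * u x) \<le> cmod c * Cb_rho_norm \<rho> u"
proof -
  have eq: "(\<lambda>x. c * u x) = (\<lambda>x. c * u x + 0 * u x)" by simp
  show cu: "(\<lambda>x. c * u x) \<in> Cb_rho \<rho>" by (subst eq, rule Cb_rho_lin[OF u u])
  have pdc: "pd ls (\<lambda>x. c * u x) = (\<lambda>x. c * pd ls u x)" if "length ls \<le> hk \<rho>" for ls
    by (subst eq, subst pd_lin[OF u u that]) simp
  have S: "supnorm (pd ls (\<lambda>x. c * u x)) \<le> cmod c * supnorm (pd ls u)" if l: "length ls \<le> hk \<rho>" for ls
  proof -
    have b: "bounded (range (pd ls u))" using Cb_rho_D(2)[OF u l] by (simp add: Cb_def)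
    show ?thesis unfolding pdc[OF l]
      by (rule supnorm_le) (simp add: norm_mult mult_left_mono supnorm_ge[OF b])
  qed
  have H: "hoelder_semi (halpha \<rho>) (pd ls (\<lambda>x. c * u x)) \<le> cmod c * hoelder_semi (halpha \<rho>) (pd ls u)"
    if h: "halpha \<rho> > 0" and l: "length ls = hk \<rho>" for ls
  proof -
    obtain L where L: "\<And>x y. cmod (pd ls u x - pd ls u y) \<le> L * dist x y powr halpha \<rho>"
      using Cb_rho_D(3)[OF u h l] by auto
    show ?thesis unfolding pdc[of ls, OF eq_imp_le[OF l]]
    proof (rule hoelder_le)
      fix x y :: "real^'n" assume "x \<noteq> y"
      have "cmod (c * pd ls u x - c * pd ls u y) / dist x y powr halpha \<rho>
          = cmod c * (cmod (pd ls u x - pd ls u y) / dist x y powr halpha \<rho>)"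
        by (simp add: right_diff_distrib[symmetric] norm_mult)
      also have "\<dots> \<le> cmod c * hoelder_semi (halpha \<rho>) (pd ls u)"
        by (intro mult_left_mono hoelder_ge[OF L \<open>x \<noteq> y\<close>]) auto
      finally show "cmod (c * pd ls u x - c * pd ls u y) / dist x y powr halpha \<rho> \<le> cmod c * hoelder_semi (halpha \<rho>) (pd ls u)" .
    qed
  qed
  have "(\<Sum>ls\<in>{ls. length ls \<le> hk \<rho>}. supnorm (pd ls (\<lambda>x. c * u x)))
      \<le> (\<Sum>ls\<in>{ls. length ls \<le> hk \<rho>}. cmod c * supnorm (pd ls u))"
    by (rule sum_mono) (use S in auto)
  moreover have "(if halpha \<rho> > 0 then (\<Sum>ls\<in>{ls. length ls = hk \<rho>}. hoelder_semi (halpha \<rho>) (pd ls (\<lambda>x. c * u x))) else 0)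
     \<le> cmod c * (if halpha \<rho> > 0 then (\<Sum>ls\<in>{ls. length ls = hk \<rho>}. hoelder_semi (halpha \<rho>) (pd ls u)) else 0)"
    using H by (auto simp: sum_distrib_left intro!: sum_mono)
  ultimately show "Cb_rho_norm \<rho> (\<lambda>x. c * u x) \<le> cmod c * Cb_rho_norm \<rho> u"
    unfolding Cb_rho_norm_def by (simp add: sum_distrib_left distrib_left)
qed



lemma ibound:
  fixes g :: "real \<Rightarrow> complex"
  assumes S: "S \<in> sets borel" and wi: "integrable lborel (\<lambda>t. indicator S t *\<^sub>R w t)"
    and gm: "(\<lambda>t. indicator S t *\<^sub>R g t) \<in> borel_measurable borel"
    and b: "\<And>t. t \<in> S \<Longrightarrow> cmod (g t) \<le> w t"
  shows "integrable lborel (\<lambda>t. indicator S t *\<^sub>R g t)"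
    and "cmod (integral\<^sup>L lborel (\<lambda>t. indicator S t *\<^sub>R g t)) \<le> integral\<^sup>L lborel (\<lambda>t. indicator S t *\<^sub>R w t)"
proof -
  have pb: "norm (indicator S t *\<^sub>R g t) \<le> indicator S t *\<^sub>R w t" for t
    using b[of t] by (cases "t \<in> S") auto
  show gi: "integrable lborel (\<lambda>t. indicator S t *\<^sub>R g t)"
  proof (rule Bochner_Integration.integrable_bound[OF wi gm[folded measurable_lborel2]], rule AE_I2)
    fix t show "norm (indicator S t *\<^sub>R g t) \<le> norm (indicator S t *\<^sub>R w t)"
      using pb[of t] by (metis abs_ge_self order_trans real_norm_def)
  qed
  have "cmod (integral\<^sup>L lborel (\<lambda>t. indicator S t *\<^sub>R g t)) \<le> integral\<^sup>L lborel (\<lambda>t. norm (indicator S t *\<^sub>R g t))"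
    by (rule integral_norm_bound)
  also have "\<dots> \<le> integral\<^sup>L lborel (\<lambda>t. indicator S t *\<^sub>R w t)"
    by (rule integral_mono[OF integrable_norm[OF gi] wi pb])
  finally show "cmod (integral\<^sup>L lborel (\<lambda>t. indicator S t *\<^sub>R g t)) \<le> integral\<^sup>L lborel (\<lambda>t. indicator S t *\<^sub>R w t)" .
qed

lemma int_cont:
  fixes g :: "real \<Rightarrow> ('n::finite) fn"
  assumes S: "S \<in> sets borel" and wi: "integrable lborel (\<lambda>t. indicator S t *\<^sub>R w t)"
    and gm: "\<And>y. (\<lambda>t. indicator S t *\<^sub>R g t y) \<in> borel_measurable borel"
    and gb: "\<And>t y. t \<in> S \<Longrightarrow> cmod (g t y) \<le> w t"
    and gc: "\<And>t. t \<in> S \<Longrightarrow> continuous_on UNIV (g t)"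
  shows "continuous_on UNIV (\<lambda>x. integral\<^sup>L lborel (\<lambda>t. indicator S t *\<^sub>R g t x))"
proof (rule continuous_on_sequentiallyI)
  fix u :: "nat \<Rightarrow> real^'n" and a assume u: "u \<longlonglongrightarrow> a"
  show "(\<lambda>n. integral\<^sup>L lborel (\<lambda>t. indicator S t *\<^sub>R g t (u n))) \<longlonglongrightarrow> integral\<^sup>L lborel (\<lambda>t. indicator S t *\<^sub>R g t a)"
  proof (rule integral_dominated_convergence[where w="\<lambda>t. indicator S t *\<^sub>R w t"])
    show "AE t in lborel. (\<lambda>n. indicator S t *\<^sub>R g t (u n)) \<longlonglongrightarrow> indicator S t *\<^sub>R g t a"
    proof (rule AE_I2)
      fix t show "(\<lambda>n. indicator S t *\<^sub>R g t (u n)) \<longlonglongrightarrow> indicator S t *\<^sub>R g t a"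
      proof (cases "t \<in> S")
        case True
        have "(\<lambda>n. g t (u n)) \<longlonglongrightarrow> g t a"
          by (rule continuous_on_tendsto_compose[OF gc[OF True] u]) auto
        then show ?thesis using True by simp
      qed simp
    qed
    show "AE t in lborel. norm (indicator S t *\<^sub>R g t (u n)) \<le> indicator S t *\<^sub>R w t" for n
      by (rule AE_I2) (use gb in \<open>auto simp: indicator_def\<close>)
  qed (use wi gm in auto)
qed

lemma int_deriv:
  fixes g g' :: "real \<Rightarrow> ('n::finite) fn"
  assumes S: "S \<in> sets borel" and wi: "integrable lborel (\<lambda>t. indicator S t *\<^sub>R w t)"
    and gm: "\<And>y. (\<lambda>t. indicator S t *\<^sub>R g t y) \<in> borel_measurable borel"
    and gm': "\<And>y. (\<lambda>t. indicator S t *\<^sub>R g' t y) \<in> borel_measurable borel"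
    and gd: "\<And>t y. t \<in> S \<Longrightarrow> ((\<lambda>h. g t (y + h *\<^sub>R v)) has_vector_derivative g' t y) (at 0)"
    and gb: "\<And>t y. t \<in> S \<Longrightarrow> cmod (g t y) \<le> w t"
    and gb': "\<And>t y. t \<in> S \<Longrightarrow> cmod (g' t y) \<le> w t"
  shows "((\<lambda>h. integral\<^sup>L lborel (\<lambda>t. indicator S t *\<^sub>R g t (x + h *\<^sub>R v))) has_vector_derivative
           integral\<^sup>L lborel (\<lambda>t. indicator S t *\<^sub>R g' t x)) (at 0)"
proof -
  have gi: "integrable lborel (\<lambda>t. indicator S t *\<^sub>R g t y)" for y
    by (rule ibound(1)[OF S wi gm gb])
  define H where "H h = integral\<^sup>L lborel (\<lambda>t. indicator S t *\<^sub>R g t (x + h *\<^sub>R v))" for h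
  have "((\<lambda>h. (H h - H 0) /\<^sub>R (h - 0)) \<longlongrightarrow> integral\<^sup>L lborel (\<lambda>t. indicator S t *\<^sub>R g' t x)) (at 0)"
    unfolding tendsto_at_iff_sequentially
  proof (intro allI impI)
    fix X :: "nat \<Rightarrow> real" assume X0: "\<forall>i. X i \<in> UNIV - {0}" and X: "X \<longlonglongrightarrow> 0"
    define s where "s n t = (indicator S t *\<^sub>R g t (x + X n *\<^sub>R v) - indicator S t *\<^sub>R g t x) /\<^sub>R X n" for n t
    have eq: "(H (X n) - H 0) /\<^sub>R (X n - 0) = integral\<^sup>L lborel (s n)" for n
      unfolding H_def s_def by (simp add: Bochner_Integration.integral_diff[OF gi gi])
    have "(\<lambda>n. integral\<^sup>L lborel (s n)) \<longlonglongrightarrow> integral\<^sup>L lborel (\<lambda>t. indicator S t *\<^sub>R g' t x)"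
    proof (rule integral_dominated_convergence[where w="\<lambda>t. indicator S t *\<^sub>R w t"])
      show "s n \<in> borel_measurable lborel" for n
        unfolding s_def measurable_lborel2 using gm[of "x + X n *\<^sub>R v"] gm[of x] by (intro borel_measurable_scaleR[OF measurable_const] borel_measurable_diff) auto
      show "AE t in lborel. (\<lambda>n. s n t) \<longlonglongrightarrow> indicator S t *\<^sub>R g' t x"
      proof (rule AE_I2)
        fix t show "(\<lambda>n. s n t) \<longlonglongrightarrow> indicator S t *\<^sub>R g' t x"
        proof (cases "t \<in> S")
          case True
          have "((\<lambda>h. (g t (x + h *\<^sub>R v) - g t (x + 0 *\<^sub>R v)) /\<^sub>R (h - 0)) \<longlongrightarrow> g' t x) (at 0)"
            using gd[OF True, of x] unfolding hvd_iff by simp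
          then have "((\<lambda>h. (g t (x + h *\<^sub>R v) - g t (x + 0 *\<^sub>R v)) /\<^sub>R (h - 0)) \<circ> X) \<longlonglongrightarrow> g' t x"
            unfolding tendsto_at_iff_sequentially using X0 X by blast
          then show ?thesis using True by (simp add: s_def o_def scaleR_diff_right)
        qed (simp add: s_def)
      qed
      show "AE t in lborel. norm (s n t) \<le> indicator S t *\<^sub>R w t" for n
      proof (rule AE_I2)
        fix t show "norm (s n t) \<le> indicator S t *\<^sub>R w t"
        proof (cases "t \<in> S")
          case True
          have "cmod (g t (x + X n *\<^sub>R v) - g t (x + 0 *\<^sub>R v)) \<le> w t * \<bar>X n - 0\<bar>"
            by (rule mvt_bound[where \<phi>="\<lambda>h. g t (x + h *\<^sub>R v)" and \<phi>'="\<lambda>s. g' t (x + s *\<^sub>R v)"])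
               (use shift_deriv[OF gd[OF True]] gb'[OF True] in auto)
          moreover have "X n \<noteq> 0" using X0 by auto
          ultimately have "cmod (g t (x + X n *\<^sub>R v) - g t x) / \<bar>X n\<bar> \<le> w t"
            by (simp add: divide_le_eq)
          moreover have "norm (s n t) = cmod (g t (x + X n *\<^sub>R v) - g t x) / \<bar>X n\<bar>"
            using True by (simp add: s_def divide_inverse_commute)
          ultimately show ?thesis using True by simp
        qed (simp add: s_def)
      qed
    qed (use wi gm' in auto)
    then show "((\<lambda>h. (H h - H 0) /\<^sub>R (h - 0)) \<circ> X) \<longlonglongrightarrow> integral\<^sup>L lborel (\<lambda>t. indicator S t *\<^sub>R g' t x)"
      using eq by (simp add: o_def)
  qed
  then show ?thesis unfolding H_def by (subst hvd_iff) simp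
qed



lemma int_Cb_rho:
  fixes F :: "real \<Rightarrow> ('n::finite) fn" and w :: "real \<Rightarrow> real" and S :: "real set"
  assumes S: "S \<in> sets borel"
    and FC: "\<And>t. t \<in> S \<Longrightarrow> F t \<in> Cb_rho \<rho>"
    and Fw: "\<And>t. t \<in> S \<Longrightarrow> Cb_rho_norm \<rho> (F t) \<le> w t"
    and wi: "set_integrable lborel S w"
    and Fm: "\<And>x. (\<lambda>t. indicator S t *\<^sub>R F t x) \<in> borel_measurable borel"
  shows "(\<lambda>x. LINT t:S|lborel. F t x) \<in> Cb_rho \<rho> \<and>
         Cb_rho_norm \<rho> (\<lambda>x. LINT t:S|lborel. F t x) \<le> (2 * real (card {ls::'n list. length ls \<le> hk \<rho>})) * (LINT t:S|lborel. w t)"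
proof -
  define G where "G = (\<lambda>ls x. integral\<^sup>L lborel (\<lambda>t. indicator S t *\<^sub>R pd ls (F t) x))"
  define W where "W = integral\<^sup>L lborel (\<lambda>t. indicator S t *\<^sub>R w t)"
  have wi': "integrable lborel (\<lambda>t. indicator S t *\<^sub>R w t)" using wi unfolding set_integrable_def .
  have bnd: "cmod (pd ls (F t) x) \<le> w t" if "t \<in> S" "length ls \<le> hk \<rho>" for t ls x
  proof -
    have "cmod (pd ls (F t) x) \<le> supnorm (pd ls (F t))"
      using supnorm_ge[of "pd ls (F t)" x] Cb_rho_D(2)[OF FC[OF that(1)] that(2)] unfolding Cb_def by auto
    also have "\<dots> \<le> Cb_rho_norm \<rho> (F t)" by (rule Cb_rho_norm_ge(1)[OF FC[OF that(1)] that(2)])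
    also have "\<dots> \<le> w t" by (rule Fw[OF that(1)])
    finally show ?thesis .
  qed
  have hbnd: "cmod (pd ls (F t) x - pd ls (F t) y) \<le> w t * dist x y powr halpha \<rho>"
    if th: "t \<in> S" "halpha \<rho> > 0" "length ls = hk \<rho>" for t ls x y
  proof -
    obtain L where L: "\<And>x y. cmod (pd ls (F t) x - pd ls (F t) y) \<le> L * dist x y powr halpha \<rho>"
      using Cb_rho_D(3)[OF FC[OF th(1)] th(2,3)] by auto
    have "cmod (pd ls (F t) x - pd ls (F t) y) \<le> hoelder_semi (halpha \<rho>) (pd ls (F t)) * dist x y powr halpha \<rho>"
      by (rule hoelder_ineq[OF L])
    also have "\<dots> \<le> w t * dist x y powr halpha \<rho>"
      by (intro mult_right_mono) (use Cb_rho_norm_ge(2)[OF FC[OF th(1)] th(2,3)] Fw[OF th(1)] in auto)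
    finally show ?thesis .
  qed
  have meas: "(\<lambda>t. indicator S t *\<^sub>R pd ls (F t) x) \<in> borel_measurable borel" if "length ls \<le> hk \<rho>" for ls x
    using that
  proof (induction ls arbitrary: x)
    case Nil then show ?case using Fm by simp
  next
    case (Cons i ls)
    then have l: "length ls < hk \<rho>" and l': "length ls \<le> hk \<rho>" by auto
    define X where "X n = inverse (real (Suc n))" for n
    have X0: "\<forall>n. X n \<in> UNIV - {0}" by (simp add: X_def)
    have X: "X \<longlonglongrightarrow> 0" unfolding X_def by (rule LIMSEQ_inverse_real_of_nat)
    define q where "q n t = (indicator S t *\<^sub>R pd ls (F t) (x + X n *\<^sub>R axis i 1) - indicator S t *\<^sub>R pd ls (F t) x) /\<^sub>R X n" for n t
    show ?case
    proof (rule borel_measurable_LIMSEQ_metric[where f = q])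
      show "q n \<in> borel_measurable borel" for n
        unfolding q_def using Cons.IH[OF l', of "x + X n *\<^sub>R axis i 1"] Cons.IH[OF l', of x]
        by (intro borel_measurable_scaleR[OF measurable_const] borel_measurable_diff) auto
      fix t show "(\<lambda>n. q n t) \<longlonglongrightarrow> indicator S t *\<^sub>R pd (i # ls) (F t) x"
      proof (cases "t \<in> S")
        case True
        have "((\<lambda>h. (pd ls (F t) (x + h *\<^sub>R axis i 1) - pd ls (F t) (x + 0 *\<^sub>R axis i 1)) /\<^sub>R (h - 0)) \<longlongrightarrow> pd (i # ls) (F t) x) (at 0)"
          using Cb_rho_D(1)[OF FC[OF True] l, of x i] unfolding hvd_iff by simp
        then have "((\<lambda>h. (pd ls (F t) (x + h *\<^sub>R axis i 1) - pd ls (F t) (x + 0 *\<^sub>R axis i 1)) /\<^sub>R (h - 0)) \<circ> X) \<longlonglongrightarrow> pd (i # ls) (F t) x"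
          unfolding tendsto_at_iff_sequentially using X0 X by blast
        then show ?thesis using True by (simp add: q_def o_def scaleR_diff_right)
      qed (simp add: q_def)
    qed
  qed
  have dG: "((\<lambda>h. G ls (x + h *\<^sub>R axis i 1)) has_vector_derivative G (i # ls) x) (at 0)"
    if l: "length ls < hk \<rho>" for ls i x
  proof -
    have l': "length ls \<le> hk \<rho>" "length (i # ls) \<le> hk \<rho>" using l by auto
    show ?thesis unfolding G_def
      by (rule int_deriv[OF S wi' meas[OF l'(1)] meas[OF l'(2)]])
         (use Cb_rho_D(1)[OF FC l] bnd[OF _ l'(1)] bnd[OF _ l'(2)] in auto)
  qed
  have pdG: "pd ls (G []) = G ls" if "length ls \<le> hk \<rho>" for ls
    using that
  proof (induction ls)
    case Nil then show ?case by (simp add: G_def)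
  next
    case (Cons i ls)
    then have l: "length ls < hk \<rho>" and l': "length ls \<le> hk \<rho>" by auto
    show ?case
    proof
      fix x
      show "pd (i # ls) (G []) x = G (i # ls) x"
        using Cons.IH[OF l'] by (simp add: partial_d_def vector_derivative_at[OF dG[OF l]])
    qed
  qed
  have G0: "(\<lambda>x. LINT t:S|lborel. F t x) = G []"
    by (simp add: G_def set_lebesgue_integral_def)
  have Gb: "cmod (G ls x) \<le> W" if "length ls \<le> hk \<rho>" for ls x
    unfolding G_def W_def by (rule ibound(2)[OF S wi' meas[OF that] bnd[OF _ that]])
  have W0: "0 \<le> W" using Gb[of "[]" 0] norm_ge_zero[of "G [] 0"] by (simp del: norm_ge_zero)
  have Gc: "continuous_on UNIV (G ls)" if "length ls \<le> hk \<rho>" for ls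
    unfolding G_def
    by (rule int_cont[OF S wi' meas[OF that] bnd[OF _ that]]) (use Cb_rho_D(2)[OF FC that] in \<open>auto simp: Cb_def\<close>)
  have Gh: "cmod (G ls x - G ls y) \<le> W * dist x y powr halpha \<rho>"
    if h: "halpha \<rho> > 0" and l: "length ls = hk \<rho>" for ls x y
  proof -
    have l': "length ls \<le> hk \<rho>" using l by simp
    let ?c = "dist x y powr halpha \<rho>"
    have ix: "integrable lborel (\<lambda>t. indicator S t *\<^sub>R pd ls (F t) z)" for z
      by (rule ibound(1)[OF S wi' meas[OF l'] bnd[OF _ l']])
    have eq: "G ls x - G ls y = integral\<^sup>L lborel (\<lambda>t. indicator S t *\<^sub>R (pd ls (F t) x - pd ls (F t) y))"
      unfolding G_def by (simp add: Bochner_Integration.integral_diff[OF ix ix, symmetric] scaleR_diff_right)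
    have wc: "integrable lborel (\<lambda>t. indicator S t *\<^sub>R (w t * ?c))"
      using integrable_mult_left[OF wi', of ?c] by (simp add: mult.assoc)
    have "cmod (integral\<^sup>L lborel (\<lambda>t. indicator S t *\<^sub>R (pd ls (F t) x - pd ls (F t) y)))
        \<le> integral\<^sup>L lborel (\<lambda>t. indicator S t *\<^sub>R (w t * ?c))"
      by (rule ibound(2)[OF S wc])
         (use meas[OF l', of x] meas[OF l', of y] hbnd[OF _ h l] in \<open>auto simp: scaleR_diff_right\<close>)
    also have "\<dots> = W * ?c"
      unfolding W_def by (simp add: mult.assoc[symmetric])
    finally show ?thesis using eq by simp
  qed
  have mem: "G [] \<in> Cb_rho \<rho>"
    unfolding Cb_rho_def
  proof (intro CollectI conjI allI impI)
    fix ls :: "'n list" and i x assume l: "length ls < hk \<rho>"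
    then show "((\<lambda>t. pd ls (G []) (x + t *\<^sub>R axis i 1)) has_vector_derivative pd (i # ls) (G []) x) (at 0)"
      using dG[OF l] pdG[of ls] pdG[of "i # ls"] by simp
  next
    fix ls :: "'n list" assume l: "length ls \<le> hk \<rho>"
    show "pd ls (G []) \<in> Cb"
      unfolding pdG[OF l] Cb_def using Gc[OF l] Gb[OF l] by (auto simp: bounded_iff)
  next
    fix ls :: "'n list" assume h: "0 < halpha \<rho>" and l: "length ls = hk \<rho>"
    show "\<exists>L. \<forall>x y. cmod (pd ls (G []) x - pd ls (G []) y) \<le> L * dist x y powr halpha \<rho>"
      using Gh[OF h l] pdG[of ls] l by auto
  qed
  have s1: "(\<Sum>ls\<in>{ls. length ls \<le> hk \<rho>}. supnorm (pd ls (G []))) \<le> real (card {ls::'n list. length ls \<le> hk \<rho>}) * W"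
  proof -
    have "(\<Sum>ls\<in>{ls. length ls \<le> hk \<rho>}. supnorm (pd ls (G []))) \<le> (\<Sum>ls\<in>{ls::'n list. length ls \<le> hk \<rho>}. W)"
      by (rule sum_mono) (use pdG Gb in \<open>auto intro!: supnorm_le\<close>)
    then show ?thesis by simp
  qed
  have s2: "(if halpha \<rho> > 0 then (\<Sum>ls\<in>{ls. length ls = hk \<rho>}. hoelder_semi (halpha \<rho>) (pd ls (G []))) else 0)
      \<le> real (card {ls::'n list. length ls \<le> hk \<rho>}) * W"
  proof (cases "halpha \<rho> > 0")
    case True
    have "(\<Sum>ls\<in>{ls. length ls = hk \<rho>}. hoelder_semi (halpha \<rho>) (pd ls (G []))) \<le> (\<Sum>ls\<in>{ls::'n list. length ls = hk \<rho>}. W)"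
    proof (rule sum_mono)
      fix ls :: "'n list" assume "ls \<in> {ls. length ls = hk \<rho>}"
      then have l: "length ls = hk \<rho>" by simp
      show "hoelder_semi (halpha \<rho>) (pd ls (G [])) \<le> W"
      proof (rule hoelder_le)
        fix x y :: "real^'n" assume "x \<noteq> y"
        then have "dist x y powr halpha \<rho> > 0" by simp
        then show "cmod (pd ls (G []) x - pd ls (G []) y) / dist x y powr halpha \<rho> \<le> W"
          using Gh[OF True l, of x y] pdG[of ls] l by (simp add: divide_le_eq)
      qed
    qed
    also have "\<dots> = real (card {ls::'n list. length ls = hk \<rho>}) * W" by simp
    also have "\<dots> \<le> real (card {ls::'n list. length ls \<le> hk \<rho>}) * W"
      by (intro mult_right_mono W0) (auto intro!: card_mono finite_ls)
    finally show ?thesis using True by simp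
  next
    case False then show ?thesis using W0 by simp
  qed
  have "Cb_rho_norm \<rho> (G []) \<le> (2 * real (card {ls::'n list. length ls \<le> hk \<rho>})) * W"
    unfolding Cb_rho_norm_def using s1 s2 by linarith
  then show ?thesis using mem G0 W_def by (simp add: set_lebesgue_integral_def)
qed



lemma exp_tail:
  assumes a: "(a::real) > 0"
  shows "set_integrable lborel {1..} (\<lambda>t. exp (- a * t))" "(LINT t:{1..}|lborel. exp (- a * t)) = exp (- a) / a"
proof -
  have "(\<lambda>t. exp (- a * t)) absolutely_integrable_on {1..}"
    by (intro nonnegative_absolutely_integrable_1 integrable_on_exp_minus_to_infinity a) auto
  then have li: "integrable lebesgue (\<lambda>t. indicator {1..} t *\<^sub>R exp (- a * t))"
    unfolding set_integrable_def .
  have "(\<lambda>t. indicator {1..} t *\<^sub>R exp (- a * t)) \<in> borel_measurable lborel" by measurable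
  then show si: "set_integrable lborel {1..} (\<lambda>t. exp (- a * t))"
    unfolding set_integrable_def using integrable_completion li by blast
  have "(LINT t:{1..}|lborel. exp (- a * t)) = integral {1..} (\<lambda>t. exp (- a * t))"
    by (rule set_borel_integral_eq_integral(2)[OF si])
  also have "\<dots> = exp (- a * 1) / a"
    by (rule integral_unique[OF has_integral_exp_minus_to_infinity[OF a]])
  finally show "(LINT t:{1..}|lborel. exp (- a * t)) = exp (- a) / a" by simp
qed

lemma meas_T:
  fixes T :: "real \<Rightarrow> ('n::finite) fn \<Rightarrow> 'n fn"
  assumes m: "(\<lambda>p. T (fst p) f (snd p)) \<in> borel_measurable (restrict_space borel {0<..} \<Otimes>\<^sub>M borel)"
    and c: "c \<in> borel_measurable borel"
  shows "(\<lambda>t. indicator {0<..} t *\<^sub>R (c t * T t f x)) \<in> borel_measurable borel"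
proof -
  have p: "(\<lambda>t. (t, x)) \<in> measurable (restrict_space borel {0<..}) (restrict_space borel {0<..} \<Otimes>\<^sub>M borel)"
    by (intro measurable_Pair measurable_ident_sets) auto
  have m1: "(\<lambda>t. T t f x) \<in> borel_measurable (restrict_space borel {0<..})"
    using measurable_compose[OF p m] by simp
  have m2: "c \<in> borel_measurable (restrict_space borel {0::real<..})"
    using c by (rule measurable_restrict_space1)
  have "(\<lambda>t. c t * T t f x) \<in> borel_measurable (restrict_space borel {0<..})"
    using m1 m2 by (intro borel_measurable_times) auto
  then show ?thesis
    by (subst (asm) borel_measurable_restrict_space_iff) auto
qed

lemma lim_A:
  fixes \<phi> :: "real \<Rightarrow> real"
  assumes phi: "set_integrable lborel {0<..<1} \<phi>"
  shows "((\<lambda>s. LINT t:{0<..<1}|lborel. exp (- s * t) * \<bar>\<phi> t\<bar>) \<longlongrightarrow> 0) at_top"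
proof -
  have pa: "integrable lborel (\<lambda>t. indicator {0<..<1} t *\<^sub>R \<bar>\<phi> t\<bar>)"
    using set_integrable_abs[OF phi] unfolding set_integrable_def .
  have pm: "(\<lambda>t. indicator {0<..<1} t *\<^sub>R \<phi> t) \<in> borel_measurable borel"
    using phi unfolding set_integrable_def by (simp add: borel_measurable_integrable)
  have "((\<lambda>s. integral\<^sup>L lborel (\<lambda>t. indicator {0<..<1} t *\<^sub>R (exp (- s * t) * \<bar>\<phi> t\<bar>))) \<longlongrightarrow>
          integral\<^sup>L lborel (\<lambda>t::real. 0::real)) at_top"
  proof (rule integral_dominated_convergence_at_top[where M=lborel and s="\<lambda>s t. indicator {0<..<1} t *\<^sub>R (exp (- s * t) * \<bar>\<phi> t\<bar>)" and f="\<lambda>t. 0" and w="\<lambda>t. indicator {0<..<1} t *\<^sub>R \<bar>\<phi> t\<bar>"])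
    show "integrable lborel (\<lambda>t. indicator {0<..<1} t *\<^sub>R \<bar>\<phi> t\<bar>)" by (rule pa)
    show "(\<lambda>t. indicator {0<..<1} t *\<^sub>R (exp (- s * t) * \<bar>\<phi> t\<bar>)) \<in> borel_measurable lborel" for s
    proof -
      have "(\<lambda>t. exp (- s * t) * \<bar>indicator {0<..<1} t *\<^sub>R \<phi> t\<bar>) \<in> borel_measurable borel"
        using pm by measurable
      moreover have "(\<lambda>t. exp (- s * t) * \<bar>indicator {0<..<1} t *\<^sub>R \<phi> t\<bar>) = (\<lambda>t. indicator {0<..<1} t *\<^sub>R (exp (- s * t) * \<bar>\<phi> t\<bar>))"
        by (auto simp: indicator_def fun_eq_iff)
      ultimately show ?thesis by simp
    qed
    show "AE t in lborel. ((\<lambda>s. indicator {0<..<1} t *\<^sub>R (exp (- s * t) * \<bar>\<phi> t\<bar>)) \<longlongrightarrow> 0) at_top"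
    proof (rule AE_I2)
      fix t :: real show "((\<lambda>s. indicator {0<..<1} t *\<^sub>R (exp (- s * t) * \<bar>\<phi> t\<bar>)) \<longlongrightarrow> 0) at_top"
      proof (cases "t \<in> {0<..<1}")
        case True
        then have "t > 0" by simp
        then have "((\<lambda>s. exp (- s * t)) \<longlongrightarrow> 0) at_top" by real_asymp
        then have "((\<lambda>s. exp (- s * t) * \<bar>\<phi> t\<bar>) \<longlongrightarrow> 0 * \<bar>\<phi> t\<bar>) at_top" by (intro tendsto_mult tendsto_const)
        then show ?thesis using True by simp
      qed simp
    qed
    show "\<forall>\<^sub>F s in at_top. AE t in lborel. norm (indicator {0<..<1} t *\<^sub>R (exp (- s * t) * \<bar>\<phi> t\<bar>)) \<le> indicator {0<..<1} t *\<^sub>R \<bar>\<phi> t\<bar>"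
    proof (rule eventually_mono[OF eventually_ge_at_top[of 0]], rule AE_I2)
      fix s t :: real assume s: "0 \<le> s"
      show "norm (indicator {0<..<1} t *\<^sub>R (exp (- s * t) * \<bar>\<phi> t\<bar>)) \<le> indicator {0<..<1} t *\<^sub>R \<bar>\<phi> t\<bar>"
      proof (cases "t \<in> {0<..<1}")
        case True
        then have "exp (- s * t) \<le> 1" using s by simp
        then show ?thesis using True by (simp add: abs_mult mult_left_le_one_le)
      qed simp
    qed
  qed simp
  then show ?thesis by (simp add: set_lebesgue_integral_def)
qed



theorem lemma6p2:
  fixes T :: "real \<Rightarrow> (real^'n::finite \<Rightarrow> complex) \<Rightarrow> (real^'n \<Rightarrow> complex)"
    and M \<omega> \<rho> :: real and \<phi> :: "real \<Rightarrow> real"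
  assumes sg: "kernel_semigroup T M \<omega>"
    and Cb: "Cb_semigroup T"
    and sF: "\<forall>t>0. strong_Feller (T t)"
    and rho: "\<rho> > 0"
    and reg: "\<forall>t>0. \<forall>f\<in>Bb. T t f \<in> Cb_rho \<rho>"
    and phi: "set_integrable lborel {0<..<1} \<phi>"
    and est: "\<forall>t\<in>{0<..<1}. \<forall>f\<in>Bb. Cb_rho_norm \<rho> (T t f) \<le> \<phi> t * supnorm f"
  shows "\<exists>C :: complex \<Rightarrow> real.
           (\<forall>z. Re z > \<omega> \<longrightarrow> (\<forall>f\<in>Bb. laplace_tr T z f \<in> Cb_rho \<rho>
                 \<and> Cb_rho_norm \<rho> (laplace_tr T z f) \<le> C z * supnorm f))
         \<and> (\<forall>\<epsilon>>0. \<exists>r. \<forall>z. Re z > max r \<omega> \<longrightarrow> C z < \<epsilon>)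
         \<and> Domain (full_generator T) \<subseteq> Cb_rho \<rho>"
proof -
  from sg have sg2: "\<And>t s f. t > 0 \<Longrightarrow> s > 0 \<Longrightarrow> f \<in> Bb \<Longrightarrow> T (t + s) f = T t (T s f)"
    and sg3: "\<And>t f. t > 0 \<Longrightarrow> f \<in> Bb \<Longrightarrow> supnorm (T t f) \<le> M * exp (\<omega> * t) * supnorm f"
    and sg4: "\<And>f. f \<in> Bb \<Longrightarrow> (\<lambda>p. T (fst p) f (snd p)) \<in> borel_measurable (restrict_space borel {0<..} \<Otimes>\<^sub>M borel)"
    unfolding kernel_semigroup_def by auto
  have CbBb: "g \<in> Bb" if "g \<in> Cb" for g
    using that unfolding Cb_def Bb_def by (auto intro: borel_measurable_continuous_onI)
  have TB: "T t g \<in> Bb" if "t > 0" "g \<in> Bb" for t g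
    using sF that CbBb unfolding strong_Feller_def by auto
  have sn0: "0 \<le> supnorm g" if "g \<in> Bb" for g
    using that unfolding Bb_def by (auto intro: supnorm_nonneg)
  define c0 where "c0 = \<phi> (1/2)"
  define K where "K = \<bar>c0\<bar> * \<bar>M\<bar>"
  have K0: "0 \<le> K" unfolding K_def by simp
  have big: "Cb_rho_norm \<rho> (T t g) \<le> K * exp (\<omega> * (t - 1/2)) * supnorm g" if t: "t \<ge> 1" and g: "g \<in> Bb" for t g
  proof -
    have eq: "T t g = T (1/2) (T (t - 1/2) g)"
      using sg2[of "1/2" "t - 1/2" g] t g by simp
    have gB: "T (t - 1/2) g \<in> Bb" using TB t g by simp
    have "Cb_rho_norm \<rho> (T (1/2) (T (t - 1/2) g)) \<le> c0 * supnorm (T (t - 1/2) g)"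
      using est gB unfolding c0_def by auto
    also have "\<dots> \<le> \<bar>c0\<bar> * supnorm (T (t - 1/2) g)"
      by (intro mult_right_mono sn0 gB) simp
    also have "\<dots> \<le> \<bar>c0\<bar> * (\<bar>M\<bar> * exp (\<omega> * (t - 1/2)) * supnorm g)"
    proof (intro mult_left_mono)
      have "supnorm (T (t - 1/2) g) \<le> M * exp (\<omega> * (t - 1/2)) * supnorm g"
        using sg3[of "t - 1/2" g] t g by simp
      also have "\<dots> \<le> \<bar>M\<bar> * exp (\<omega> * (t - 1/2)) * supnorm g"
        by (intro mult_right_mono sn0 g) auto
      finally show "supnorm (T (t - 1/2) g) \<le> \<bar>M\<bar> * exp (\<omega> * (t - 1/2)) * supnorm g" .
    qed simp
    finally show ?thesis using eq by (simp add: K_def mult.assoc)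
  qed
  define w0 where "w0 z t = (if t < 1 then exp (- Re z * t) * \<bar>\<phi> t\<bar> else exp (- Re z * t) * (K * exp (\<omega> * (t - 1/2))))" for z t
  define A where "A s = (LINT t:{0<..<1}|lborel. exp (- s * t) * \<bar>\<phi> t\<bar>)" for s
  define N where "N = 2 * real (card {ls::'n list. length ls \<le> hk \<rho>})"
  define C where "C z = N * (A (Re z) + K * exp (- \<omega> / 2) * (exp (- (Re z - \<omega>)) / (Re z - \<omega>)))" for z
  have pm: "(\<lambda>t. indicator {0<..<1} t *\<^sub>R \<phi> t) \<in> borel_measurable borel"
    using phi unfolding set_integrable_def by (simp add: borel_measurable_integrable)
  have w0int: "set_integrable lborel {0<..} (w0 z) \<and> (LINT t:{0<..}|lborel. w0 z t) = A (Re z) + K * exp (- \<omega> / 2) * (exp (- (Re z - \<omega>)) / (Re z - \<omega>))"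
    if z: "Re z > \<omega>" for z
  proof -
    have a: "Re z - \<omega> > 0" using z by simp
    have i1: "set_integrable lborel {0<..<1} (\<lambda>t. exp (- Re z * t) * \<bar>\<phi> t\<bar>)"
    proof (rule set_integrable_bound[OF set_integrable_mult_left[OF set_integrable_abs[OF phi], of "exp \<bar>Re z\<bar>"]])
      have "(\<lambda>t. exp (- Re z * t) * \<bar>indicator {0<..<1} t *\<^sub>R \<phi> t\<bar>) \<in> borel_measurable borel"
        using pm by measurable
      moreover have "(\<lambda>t. exp (- Re z * t) * \<bar>indicator {0<..<1} t *\<^sub>R \<phi> t\<bar>) = (\<lambda>t. indicator {0<..<1} t *\<^sub>R (exp (- Re z * t) * \<bar>\<phi> t\<bar>))"
        by (auto simp: indicator_def fun_eq_iff)
      ultimately show "set_borel_measurable lborel {0<..<1} (\<lambda>t. exp (- Re z * t) * \<bar>\<phi> t\<bar>)"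
        unfolding set_borel_measurable_def by simp
      show "AE t in lborel. t \<in> {0<..<1} \<longrightarrow> norm (exp (- Re z * t) * \<bar>\<phi> t\<bar>) \<le> norm (\<bar>\<phi> t\<bar> * exp \<bar>Re z\<bar>)"
      proof (rule AE_I2, intro impI)
        fix t :: real assume t: "t \<in> {0<..<1}"
        have "- Re z * t \<le> \<bar>Re z\<bar>"
        proof -
          have "- Re z * t \<le> \<bar>Re z\<bar> * t" using t by (intro mult_right_mono) auto
          also have "\<dots> \<le> \<bar>Re z\<bar>" using t by (simp add: mult_left_le)
          finally show ?thesis .
        qed
        then show "norm (exp (- Re z * t) * \<bar>\<phi> t\<bar>) \<le> norm (\<bar>\<phi> t\<bar> * exp \<bar>Re z\<bar>)"
          by (simp add: abs_mult mult.commute mult_left_mono)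
      qed
    qed
    have e1: "w0 z t = exp (- Re z * t) * \<bar>\<phi> t\<bar>" if "t \<in> {0<..<1}" for t
      using that by (simp add: w0_def)
    have e2: "w0 z t = K * exp (- \<omega> / 2) * exp (- (Re z - \<omega>) * t)" if "t \<in> {1..}" for t
    proof -
      have "w0 z t = K * (exp (- Re z * t) * exp (\<omega> * (t - 1/2)))" using that by (simp add: w0_def)
      also have "exp (- Re z * t) * exp (\<omega> * (t - 1/2)) = exp (- \<omega> / 2) * exp (- (Re z - \<omega>) * t)"
        by (simp add: mult_exp_exp algebra_simps)
      finally show ?thesis by simp
    qed
    have i2: "set_integrable lborel {1..} (\<lambda>t. K * exp (- \<omega> / 2) * exp (- (Re z - \<omega>) * t))"
      using exp_tail(1)[OF a] by (intro set_integrable_mult_right) auto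
    have i1': "set_integrable lborel {0<..<1} (w0 z)"
      using i1 by (subst set_integrable_cong[OF refl refl e1]) auto
    have i2': "set_integrable lborel {1..} (w0 z)"
      using i2 by (subst set_integrable_cong[OF refl refl e2]) auto
    have U: "{0<..} = {0<..<1} \<union> {1::real..}" by auto
    have si: "set_integrable lborel {0<..} (w0 z)"
      unfolding U by (rule set_integrable_Un[OF i1' i2']) auto
    have "(LINT t:{0<..}|lborel. w0 z t) = (LINT t:{0<..<1}|lborel. w0 z t) + (LINT t:{1..}|lborel. w0 z t)"
      unfolding U by (rule set_integral_Un[OF _ i1' i2']) auto
    also have "(LINT t:{0<..<1}|lborel. w0 z t) = A (Re z)"
      unfolding A_def by (rule set_lebesgue_integral_cong) (use e1 in auto)
    also have "(LINT t:{1..}|lborel. w0 z t) = (LINT t:{1..}|lborel. K * exp (- \<omega> / 2) * exp (- (Re z - \<omega>) * t))"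
      by (rule set_lebesgue_integral_cong) (use e2 in auto)
    also have "\<dots> = K * exp (- \<omega> / 2) * (exp (- (Re z - \<omega>)) / (Re z - \<omega>))"
      using exp_tail(2)[OF a] by simp
    finally show ?thesis using si by simp
  qed
  have part1: "\<forall>z. Re z > \<omega> \<longrightarrow> (\<forall>f\<in>Bb. laplace_tr T z f \<in> Cb_rho \<rho>
                 \<and> Cb_rho_norm \<rho> (laplace_tr T z f) \<le> C z * supnorm f)"
  proof (intro allI impI ballI)
    fix z and f :: "'n fn" assume z: "Re z > \<omega>" and f: "f \<in> Bb"
    define F where "F t = (\<lambda>x. exp (- z * complex_of_real t) * T t f x)" for t
    have lt: "laplace_tr T z f = (\<lambda>x. LINT t:{0<..}|lborel. F t x)"
      by (simp add: laplace_tr_def F_def fun_eq_iff)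
    have ne: "cmod (exp (- z * complex_of_real t)) = exp (- Re z * t)" for t
      by (simp add: norm_exp_eq_Re)
    have FC: "F t \<in> Cb_rho \<rho>" if "t \<in> {0<..}" for t
      unfolding F_def using Cb_rho_scale(1)[of "T t f"] reg f that by auto
    have Fw: "Cb_rho_norm \<rho> (F t) \<le> w0 z t * supnorm f" if t: "t \<in> {0<..}" for t
    proof -
      have "Cb_rho_norm \<rho> (F t) \<le> exp (- Re z * t) * Cb_rho_norm \<rho> (T t f)"
      proof -
        have "T t f \<in> Cb_rho \<rho>" using reg f t by auto
        from Cb_rho_scale(2)[OF this, of "exp (- z * complex_of_real t)"] show ?thesis
          unfolding F_def ne .
      qed
      also have "\<dots> \<le> w0 z t * supnorm f"
      proof (cases "t < 1")
        case True
        have "Cb_rho_norm \<rho> (T t f) \<le> \<phi> t * supnorm f" using est f t True by auto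
        also have "\<dots> \<le> \<bar>\<phi> t\<bar> * supnorm f" by (intro mult_right_mono sn0 f) simp
        finally show ?thesis using True by (simp add: w0_def mult.assoc mult_left_mono)
      next
        case False
        then have "Cb_rho_norm \<rho> (T t f) \<le> K * exp (\<omega> * (t - 1/2)) * supnorm f" using big f by simp
        then show ?thesis using False by (simp add: w0_def mult.assoc mult_left_mono)
      qed
      finally show ?thesis .
    qed
    have wi: "set_integrable lborel {0<..} (\<lambda>t. w0 z t * supnorm f)"
      using w0int[OF z] by (intro set_integrable_mult_left) auto
    have cm: "(\<lambda>t. exp (- z * complex_of_real t)) \<in> borel_measurable borel"
      by (intro borel_measurable_continuous_onI continuous_intros)
    have Fm: "(\<lambda>t. indicator {0<..} t *\<^sub>R F t x) \<in> borel_measurable borel" for x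
      unfolding F_def using meas_T[of T f, OF sg4[OF f] cm] by simp
    have R: "(\<lambda>x. LINT t:{0<..}|lborel. F t x) \<in> Cb_rho \<rho> \<and>
         Cb_rho_norm \<rho> (\<lambda>x. LINT t:{0<..}|lborel. F t x) \<le> N * (LINT t:{0<..}|lborel. w0 z t * supnorm f)"
      unfolding N_def by (rule int_Cb_rho[OF _ FC Fw wi Fm]) auto
    have e: "(LINT t:{0<..}|lborel. w0 z t) = A (Re z) + K * exp (- \<omega> / 2) * (exp (- (Re z - \<omega>)) / (Re z - \<omega>))"
      using w0int[OF z] by blast
    have "N * (LINT t:{0<..}|lborel. w0 z t * supnorm f) = N * ((LINT t:{0<..}|lborel. w0 z t) * supnorm f)"
      by (simp only: set_integral_mult_left)
    also have "\<dots> = C z * supnorm f"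
      by (simp only: e C_def mult.assoc)
    finally have eqC: "N * (LINT t:{0<..}|lborel. w0 z t * supnorm f) = C z * supnorm f" .
    show "laplace_tr T z f \<in> Cb_rho \<rho> \<and> Cb_rho_norm \<rho> (laplace_tr T z f) \<le> C z * supnorm f"
      unfolding lt using R[unfolded eqC] .
  qed
  have part2: "\<forall>\<epsilon>>0. \<exists>r. \<forall>z. Re z > max r \<omega> \<longrightarrow> C z < \<epsilon>"
  proof (intro allI impI)
    fix \<epsilon> :: real assume e: "\<epsilon> > 0"
    have l1: "(A \<longlongrightarrow> 0) at_top" unfolding A_def by (rule lim_A[OF phi])
    have l2: "((\<lambda>s. exp (- (s - \<omega>)) / (s - \<omega>)) \<longlongrightarrow> 0) at_top" by real_asymp
    have "((\<lambda>s. N * (A s + K * exp (- \<omega> / 2) * (exp (- (s - \<omega>)) / (s - \<omega>)))) \<longlongrightarrow> N * (0 + K * exp (- \<omega> / 2) * 0)) at_top"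
      by (intro tendsto_intros l1 l2)
    then have "((\<lambda>s. N * (A s + K * exp (- \<omega> / 2) * (exp (- (s - \<omega>)) / (s - \<omega>)))) \<longlongrightarrow> 0) at_top" by simp
    then have "eventually (\<lambda>s. N * (A s + K * exp (- \<omega> / 2) * (exp (- (s - \<omega>)) / (s - \<omega>))) < \<epsilon>) at_top"
      using e by (rule order_tendstoD(2))
    then obtain r where r: "\<And>s. s \<ge> r \<Longrightarrow> N * (A s + K * exp (- \<omega> / 2) * (exp (- (s - \<omega>)) / (s - \<omega>))) < \<epsilon>"
      unfolding eventually_at_top_linorder by blast
    show "\<exists>r. \<forall>z. Re z > max r \<omega> \<longrightarrow> C z < \<epsilon>"
    proof (intro exI[of _ r] allI impI)
      fix z assume "Re z > max r \<omega>"
      then have "Re z \<ge> r" by simp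
      from r[OF this] show "C z < \<epsilon>" unfolding C_def .
    qed
  qed
  have part3: "Domain (full_generator T) \<subseteq> Cb_rho \<rho>"
  proof
    fix f assume "f \<in> Domain (full_generator T)"
    then obtain g where "(f, g) \<in> full_generator T" by auto
    then have f: "f \<in> Bb" and g: "g \<in> Bb"
      and id: "\<And>t x. t > 0 \<Longrightarrow> T t f x - f x = (LINT s:{0<..t}|lborel. T s g x)"
      unfolding full_generator_def by auto
    define G where "G = (\<lambda>x. LINT s:{0<..1/2}|lborel. T s g x)"
    have FC: "T s g \<in> Cb_rho \<rho>" if "s \<in> {0<..1/2}" for s using reg g that by auto
    have Fw: "Cb_rho_norm \<rho> (T s g) \<le> \<bar>\<phi> s\<bar> * supnorm g" if "s \<in> {0<..1/2}" for s
    proof -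
      have "Cb_rho_norm \<rho> (T s g) \<le> \<phi> s * supnorm g" using est g that by auto
      also have "\<dots> \<le> \<bar>\<phi> s\<bar> * supnorm g" by (intro mult_right_mono sn0 g) simp
      finally show ?thesis .
    qed
    have wi: "set_integrable lborel {0<..1/2} (\<lambda>s. \<bar>\<phi> s\<bar> * supnorm g)"
      by (intro set_integrable_mult_left set_integrable_subset[OF set_integrable_abs[OF phi]]) auto
    have Fm: "(\<lambda>t. indicator {0<..1/2} t *\<^sub>R T t g x) \<in> borel_measurable borel" for x
    proof -
      have m: "(\<lambda>t. indicator {0<..} t *\<^sub>R ((\<lambda>_. 1) t * T t g x)) \<in> borel_measurable borel"
        by (rule meas_T[of T g, OF sg4[OF g]]) simp
      have "(\<lambda>t. indicator {..1/2} t *\<^sub>R (indicator {0<..} t *\<^sub>R ((\<lambda>_. 1) t * T t g x))) \<in> borel_measurable borel"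
        by (intro borel_measurable_scaleR m) simp
      moreover have "(\<lambda>t. indicator {..1/2} t *\<^sub>R (indicator {0<..} t *\<^sub>R ((\<lambda>_. 1) t * T t g x))) = (\<lambda>t. indicator {0<..1/2} t *\<^sub>R T t g x)"
        by (auto simp: indicator_def fun_eq_iff)
      ultimately show ?thesis by simp
    qed
    have GC: "G \<in> Cb_rho \<rho>"
      unfolding G_def using int_Cb_rho[OF _ FC Fw wi Fm] by auto
    have "f = (\<lambda>x. 1 * T (1/2) f x + (-1) * G x)"
      using id[of "1/2"] by (auto simp: G_def fun_eq_iff algebra_simps)
    moreover have "(\<lambda>x. 1 * T (1/2) f x + (-1) * G x) \<in> Cb_rho \<rho>"
      by (rule Cb_rho_lin) (use reg f GC in auto)
    ultimately show "f \<in> Cb_rho \<rho>" by simp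
  qed
  show ?thesis using part1 part2 part3 by blast
qed


end
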